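(* Let $n$ be a positive integer and $N=2^n$. Let $\delta,\alpha\in(0,1]$ be real numbers with $32\delta^2\le\alpha\le\delta/2$, $\alpha\ge N^{-2^{-300}}$, $\alpha\le2^{-30}$, and $$\frac{\delta}{\alpha}\log\frac{1}{2\alpha}\ge400\log N\cdot\log(8\log N).$$ Then there exists a set $A\subseteq\mathbb{Z}_2^n$ such that $\delta N\le|A|\le8\delta N$, $|\mathcal{R}_\alpha(A)|\ge\frac{\delta}{8\alpha^2}$ and $T_2(\mathcal{R}_\alpha(A))\le\frac{16\delta}{\alpha^4}$.
   Context: $\mathbb{Z}_2^n=(\mathbb{Z}/2\mathbb{Z})^n$ with inner product $\langle\vec x,\vec y\rangle=x_1y_1+\dots+x_ny_n\pmod 2$; $\log$ is the logarithm to base $2$. For $f:\mathbb{Z}_2^n\to\mathbb{C}$, $\widehat f(\vec r)=\sum_{\vec x}(-1)^{\langle\vec r,\vec x\rangle}f(\vec x)$; $A(\vec x)$ is the indicator of $A$, and $\mathcal{R}_\alpha(A)=\{\vec r:|\widehat A(\vec r)|\ge\alpha N\}$. For $B\subseteq\mathbb{Z}_2^n$, $T_2(B)=|\{(r_1,r_2,r_3,r_4)\in B^4: r_1+r_2=r_3+r_4\}|$. *)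

theory Defs
  imports "HOL-Analysis.Analysis"
begin

text \<open>Elements of Z_2^n are modelled as functions nat => bool vanishing outside {..<n};
  the i-th coordinate of x is x i (True = 1).\<close>

definition cube :: "nat \<Rightarrow> (nat \<Rightarrow> bool) set" where
  "cube n = {x. \<forall>i. n \<le> i \<longrightarrow> \<not> x i}"

definition vadd :: "(nat \<Rightarrow> bool) \<Rightarrow> (nat \<Rightarrow> bool) \<Rightarrow> (nat \<Rightarrow> bool)" where
  "vadd x y = (\<lambda>i. x i \<noteq> y i)"

definition ip :: "nat \<Rightarrow> (nat \<Rightarrow> bool) \<Rightarrow> (nat \<Rightarrow> bool) \<Rightarrow> nat" where
  "ip n r x = card {i. i < n \<and> r i \<and> x i} mod 2"

definition fourier_ind :: "nat \<Rightarrow> (nat \<Rightarrow> bool) set \<Rightarrow> (nat \<Rightarrow> bool) \<Rightarrow> real" where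
  "fourier_ind n A r = (\<Sum>x\<in>cube n. (-1) ^ ip n r x * (if x \<in> A then 1 else 0))"

definition large_spec :: "nat \<Rightarrow> real \<Rightarrow> (nat \<Rightarrow> bool) set \<Rightarrow> (nat \<Rightarrow> bool) set" where
  "large_spec n \<alpha> A = {r \<in> cube n. \<bar>fourier_ind n A r\<bar> \<ge> \<alpha> * 2 ^ n}"

definition T2 :: "(nat \<Rightarrow> bool) set \<Rightarrow> nat" where
  "T2 B = card {(r1, r2, r3, r4). r1 \<in> B \<and> r2 \<in> B \<and> r3 \<in> B \<and> r4 \<in> B \<and>
                  vadd r1 r2 = vadd r3 r4}"

end

theory Submission
  imports Defs "HOL-Library.Z2" "HOL-Computational_Algebra.Polynomial"
begin

definition zv :: "nat \<Rightarrow> bool" where "zv = (\<lambda>_. False)"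

definition chi :: "nat \<Rightarrow> (nat \<Rightarrow> bool) \<Rightarrow> (nat \<Rightarrow> bool) \<Rightarrow> real" where
  "chi n r x = (-1) ^ ip n r x"

lemma chi_card: "chi n r x = (-1) ^ card {i. i < n \<and> r i \<and> x i}"
  unfolding chi_def ip_def by (simp add: minus_one_power_iff)

lemma cube_eq: "cube n = (\<lambda>S i. i \<in> S) ` Pow {..<n}"
proof
  show "cube n \<subseteq> (\<lambda>S i. i \<in> S) ` Pow {..<n}"
  proof
    fix x assume "x \<in> cube n"
    then have "{i. x i} \<subseteq> {..<n}" unfolding cube_def by (auto, meson not_le)
    moreover have "x = (\<lambda>i. i \<in> {i. x i})" by simp
    ultimately show "x \<in> (\<lambda>S i. i \<in> S) ` Pow {..<n}" by blast
  qed
  show "(\<lambda>S i. i \<in> S) ` Pow {..<n} \<subseteq> cube n" unfolding cube_def by auto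
qed

lemma finite_cube[simp]: "finite (cube n)"
  by (simp add: cube_eq)

lemma card_cube: "card (cube n) = 2 ^ n"
proof -
  have "inj (\<lambda>S i. i \<in> (S::nat set))"
    by (rule injI) (metis Collect_mem_eq)
  then have "card (cube n) = card (Pow {..<n::nat})"
    unfolding cube_eq by (simp add: card_image inj_on_subset)
  then show ?thesis by (simp add: card_Pow)
qed

lemma vadd_comm: "vadd x y = vadd y x" unfolding vadd_def by auto
lemma vadd_assoc: "vadd (vadd x y) z = vadd x (vadd y z)" unfolding vadd_def by auto
lemma vadd_self[simp]: "vadd x x = zv" unfolding vadd_def zv_def by auto
lemma vadd_zv[simp]: "vadd x zv = x" "vadd zv x = x" unfolding vadd_def zv_def by auto
lemma vadd_cube: "x \<in> cube n \<Longrightarrow> y \<in> cube n \<Longrightarrow> vadd x y \<in> cube n"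
  unfolding vadd_def cube_def by auto
lemma zv_cube[simp]: "zv \<in> cube n" unfolding zv_def cube_def by auto
lemma vadd_cancel: "vadd x y = vadd x z \<longleftrightarrow> y = z"
  unfolding vadd_def by (auto simp: fun_eq_iff)
lemma vadd_eq_zv: "vadd x y = zv \<longleftrightarrow> x = y"
  unfolding vadd_def zv_def by (auto simp: fun_eq_iff)

lemma chi_sym: "chi n r x = chi n x r"
  unfolding chi_card by (simp add: conj_commute)

lemma chi_zv[simp]: "chi n zv x = 1" "chi n x zv = 1"
  unfolding chi_card zv_def by auto

lemma chi_pm: "chi n r x = 1 \<or> chi n r x = -1"
  unfolding chi_card by (simp add: minus_one_power_iff)

lemma chi_vadd: "chi n r (vadd x y) = chi n r x * chi n r y"
proof -
  define Sx where "Sx = {i. i < n \<and> r i \<and> x i}"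
  define Sy where "Sy = {i. i < n \<and> r i \<and> y i}"
  have fx: "finite Sx" "finite Sy" unfolding Sx_def Sy_def by auto
  have e: "{i. i < n \<and> r i \<and> vadd x y i} = (Sx - Sy) \<union> (Sy - Sx)"
    unfolding Sx_def Sy_def vadd_def by auto
  have c1: "card ((Sx - Sy) \<union> (Sy - Sx)) = card (Sx - Sy) + card (Sy - Sx)"
    by (rule card_Un_disjoint) (use fx in auto)
  have c2: "card Sx = card (Sx - Sy) + card (Sx \<inter> Sy)"
    by (subst card_Un_disjoint[symmetric]) (use fx in \<open>auto intro: arg_cong[where f=card]\<close>)
  have c3: "card Sy = card (Sy - Sx) + card (Sx \<inter> Sy)"
    by (subst card_Un_disjoint[symmetric]) (use fx in \<open>auto intro: arg_cong[where f=card]\<close>)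
  have "chi n r (vadd x y) = (-1) ^ (card (Sx - Sy) + card (Sy - Sx))"
    unfolding chi_card e c1 ..
  also have "\<dots> = (-1) ^ (card (Sx - Sy) + card (Sy - Sx)) * ((-1)^card (Sx \<inter> Sy) * (-1)^card (Sx \<inter> Sy))"
    by (simp flip: power_add add: minus_one_power_iff)
  also have "\<dots> = (-1::real) ^ card Sx * (-1) ^ card Sy"
    unfolding c2 c3 power_add by (simp add: algebra_simps)
  finally show ?thesis unfolding chi_card Sx_def Sy_def .
qed

lemma chi_vadd1: "chi n (vadd x y) r = chi n x r * chi n y r"
  by (metis chi_sym chi_vadd)

lemma group_sum:
  assumes fin: "finite H" and cl: "\<And>a b. a \<in> H \<Longrightarrow> b \<in> H \<Longrightarrow> vadd a b \<in> H"
  shows "(\<Sum>w\<in>H. chi n w y) = (if \<forall>w\<in>H. chi n w y = 1 then real (card H) else 0)"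
proof (cases "\<forall>w\<in>H. chi n w y = 1")
  case True then show ?thesis by simp
next
  case False
  then obtain w0 where w0: "w0 \<in> H" "chi n w0 y = -1" using chi_pm by blast
  have bij: "bij_betw (vadd w0) H H"
  proof (rule bij_betwI[where g="vadd w0"])
    show "vadd w0 \<in> H \<rightarrow> H" using cl w0 by auto
    show "vadd w0 \<in> H \<rightarrow> H" using cl w0 by auto
    show "vadd w0 (vadd w0 x) = x" for x by (simp flip: vadd_assoc)
    show "vadd w0 (vadd w0 x) = x" for x by (simp flip: vadd_assoc)
  qed
  have "(\<Sum>w\<in>H. chi n w y) = (\<Sum>w\<in>H. chi n (vadd w0 w) y)"
    using sum.reindex_bij_betw[OF bij, of "\<lambda>w. chi n w y"] by simp
  also have "\<dots> = - (\<Sum>w\<in>H. chi n w y)"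
    by (simp add: chi_vadd1 w0 sum_negf)
  finally have "(\<Sum>w\<in>H. chi n w y) = 0" by linarith
  then show ?thesis by (subst if_not_P[OF False])
qed

lemma cube_sum:
  assumes "t \<le> n"
  shows "(\<Sum>a\<in>cube t. chi n a y) = (if \<forall>i<t. \<not> y i then 2 ^ t else 0)"
proof -
  have "(\<forall>a\<in>cube t. chi n a y = 1) \<longleftrightarrow> (\<forall>i<t. \<not> y i)"
  proof
    assume h: "\<forall>a\<in>cube t. chi n a y = 1"
    show "\<forall>i<t. \<not> y i"
    proof (intro allI impI notI)
      fix i assume i: "i < t" "y i"
      have "(\<lambda>k. k = i) \<in> cube t" using i unfolding cube_def by auto
      moreover have "{k. k < n \<and> k = i \<and> y k} = {i}" using i assms by auto
      ultimately show False using h unfolding chi_card by force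
    qed
  next
    assume h: "\<forall>i<t. \<not> y i"
    show "\<forall>a\<in>cube t. chi n a y = 1"
    proof
      fix a assume "a \<in> cube t"
      then have "{k. k < n \<and> a k \<and> y k} = {}" using h unfolding cube_def by (auto, meson not_le)
      then show "chi n a y = 1" unfolding chi_card by (metis card.empty power_0)
    qed
  qed
  then show ?thesis
    by (subst group_sum) (auto simp: vadd_cube card_cube)
qed

lemma bit_add_self[simp]: "(b::bit) + b = 0"
  by (cases b) simp_all
lemma bitpoly_add_self[simp]: "(p::bit poly) + p = 0"
  by (rule poly_eqI) (simp only: coeff_add bit_add_self coeff_0)
lemma bitpoly_sum0: "(p::bit poly) + q = 0 \<longleftrightarrow> p = q"
  by (metis add.assoc add_0 bitpoly_add_self add.commute)
definition eqp :: "bit poly \<Rightarrow> bit poly \<Rightarrow> bit poly \<Rightarrow> bit poly \<Rightarrow> bool" where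
  "eqp x l y m \<longleftrightarrow> x = y \<and> (x \<noteq> 0 \<longrightarrow> l = m)"

lemma comb1:
  fixes x1 x2 x3 x4 l1 l2 l3 l4 :: "bit poly"
  assumes G: "\<And>\<mu>. (if l1 = \<mu> then x1 else 0) + (if l2 = \<mu> then x2 else 0) + (if l3 = \<mu> then x3 else 0)
     + (if l4 = \<mu> then x4 else 0) = 0"
  shows "((x1 \<noteq> 0 \<and> x2 \<noteq> 0 \<longrightarrow> l1 = l2) \<and> (x1 \<noteq> 0 \<and> x3 \<noteq> 0 \<longrightarrow> l1 = l3) \<and> (x1 \<noteq> 0 \<and> x4 \<noteq> 0 \<longrightarrow> l1 = l4)
       \<and> (x2 \<noteq> 0 \<and> x3 \<noteq> 0 \<longrightarrow> l2 = l3) \<and> (x2 \<noteq> 0 \<and> x4 \<noteq> 0 \<longrightarrow> l2 = l4) \<and> (x3 \<noteq> 0 \<and> x4 \<noteq> 0 \<longrightarrow> l3 = l4))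
     \<or> (eqp x1 l1 x2 l2 \<and> eqp x3 l3 x4 l4) \<or> (eqp x1 l1 x3 l3 \<and> eqp x2 l2 x4 l4)
     \<or> (eqp x1 l1 x4 l4 \<and> eqp x2 l2 x3 l3)"
  using G[of l1] G[of l2] G[of l3] G[of l4]
  by (cases "l1 = l2"; cases "l1 = l3"; cases "l1 = l4"; cases "l2 = l3"; cases "l2 = l4"; cases "l3 = l4")
     (simp_all add: eqp_def bitpoly_sum0)

lemma group_zero:
  fixes L X :: "nat \<Rightarrow> 'a::idom"
  assumes fin: "finite I" and h: "\<forall>e < card (L ` I). (\<Sum>i\<in>I. X i * L i ^ e) = 0"
  shows "(\<Sum>i\<in>I. if L i = \<mu> then X i else 0) = 0"
proof (cases "\<mu> \<in> L ` I")
  case False then show ?thesis by (auto intro!: sum.neutral)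
next
  case True
  define S where "S = L ` I - {\<mu>}"
  define Q where "Q = (\<Prod>\<nu>\<in>S. [:-\<nu>, 1:])"
  have finS: "finite S" using fin unfolding S_def by auto
  have "degree Q \<le> sum (degree \<circ> (\<lambda>\<nu>. [:-\<nu>, 1:])) S"
    unfolding Q_def by (rule degree_prod_sum_le[OF finS])
  also have "\<dots> = card S" by simp
  also have "\<dots> < card (L ` I)"
  proof -
    have "card (L ` I) > 0" using True fin by (auto simp: card_gt_0_iff)
    then show ?thesis unfolding S_def using True fin by (simp add: card_Diff_singleton)
  qed
  finally have degQ: "degree Q < card (L ` I)" .
  have polyQ: "poly Q z = (\<Prod>\<nu>\<in>S. z - \<nu>)" for z by (simp add: Q_def poly_prod)
  have "(\<Sum>i\<in>I. X i * poly Q (L i)) = (\<Sum>i\<in>I. X i * (\<Sum>e\<le>degree Q. coeff Q e * L i ^ e))"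
    by (simp add: poly_altdef)
  also have "\<dots> = (\<Sum>e\<le>degree Q. coeff Q e * (\<Sum>i\<in>I. X i * L i ^ e))"
    by (simp add: sum_distrib_left mult_ac sum.swap[of _ I])
  also have "\<dots> = 0" using h degQ by (intro sum.neutral) auto
  finally have s0: "(\<Sum>i\<in>I. X i * poly Q (L i)) = 0" .
  have "X i * poly Q (L i) = (if L i = \<mu> then X i else 0) * poly Q \<mu>" if "i \<in> I" for i
  proof (cases "L i = \<mu>")
    case False
    then have "L i \<in> S" using that unfolding S_def by auto
    then have "poly Q (L i) = 0" unfolding polyQ using finS by (auto simp: prod_zero_iff)
    then show ?thesis using False by simp
  qed simp
  then have "(\<Sum>i\<in>I. if L i = \<mu> then X i else 0) * poly Q \<mu> = 0"
    using s0 by (simp add: sum_distrib_right)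
  moreover have "poly Q \<mu> \<noteq> 0" unfolding polyQ using finS by (auto simp: prod_zero_iff S_def)
  ultimately show ?thesis by simp
qed


lemma group_zero':
  fixes L X :: "nat \<Rightarrow> 'a::idom"
  assumes fin: "finite I" and c: "card (L ` I) \<le> N" and h: "\<forall>e < N. (\<Sum>i\<in>I. X i * L i ^ e) = 0"
  shows "(\<Sum>i\<in>I. if L i = \<mu> then X i else 0) = 0"
proof (rule group_zero[OF fin], intro allI impI)
  fix e assume "e < card (L ` I)"
  then have "e < N" using c by linarith
  then show "(\<Sum>i\<in>I. X i * L i ^ e) = 0" using h by blast
qed

lemma G4:
  fixes x1 x2 x3 x4 l1 l2 l3 l4 :: "bit poly"
  assumes h: "\<forall>e<4. x1*l1^e + x2*l2^e + x3*l3^e + x4*l4^e = 0"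
  shows "(if l1 = \<mu> then x1 else 0) + (if l2 = \<mu> then x2 else 0) + (if l3 = \<mu> then x3 else 0)
     + (if l4 = \<mu> then x4 else 0) = 0"
proof -
  have s4: "(\<Sum>i<4. f i) = f 0 + f 1 + f 2 + f (3::nat)" for f :: "nat \<Rightarrow> bit poly"
    by (simp add: eval_nat_numeral)
  let ?X = "\<lambda>i::nat. if i = 0 then x1 else if i = 1 then x2 else if i = 2 then x3 else x4"
  let ?L = "\<lambda>i::nat. if i = 0 then l1 else if i = 1 then l2 else if i = 2 then l3 else l4"
  have c: "card (?L ` {..<4}) \<le> 4" by (rule order_trans[OF card_image_le]) simp_all
  have hh: "\<forall>e < 4. (\<Sum>i\<in>{..<4}. ?X i * ?L i ^ e) = 0"
    using h by (simp only: s4) (simp add: mult.commute)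
  from group_zero'[OF finite_lessThan c hh, of \<mu>] show ?thesis by (simp only: s4) (simp cong: if_cong split del: if_split)
qed

lemma four_lemma:
  fixes x1 x2 x3 x4 l1 l2 l3 l4 :: "bit poly"
  assumes h: "\<forall>e<4. x1*l1^e + x2*l2^e + x3*l3^e + x4*l4^e = 0"
  shows "((x1 \<noteq> 0 \<and> x2 \<noteq> 0 \<longrightarrow> l1 = l2) \<and> (x1 \<noteq> 0 \<and> x3 \<noteq> 0 \<longrightarrow> l1 = l3) \<and> (x1 \<noteq> 0 \<and> x4 \<noteq> 0 \<longrightarrow> l1 = l4)
       \<and> (x2 \<noteq> 0 \<and> x3 \<noteq> 0 \<longrightarrow> l2 = l3) \<and> (x2 \<noteq> 0 \<and> x4 \<noteq> 0 \<longrightarrow> l2 = l4) \<and> (x3 \<noteq> 0 \<and> x4 \<noteq> 0 \<longrightarrow> l3 = l4))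
     \<or> (eqp x1 l1 x2 l2 \<and> eqp x3 l3 x4 l4) \<or> (eqp x1 l1 x3 l3 \<and> eqp x2 l2 x4 l4)
     \<or> (eqp x1 l1 x4 l4 \<and> eqp x2 l2 x3 l3)"
  by (rule comb1[OF G4[OF h]])

definition pv :: "nat \<Rightarrow> (nat \<Rightarrow> bool) \<Rightarrow> bit poly" where
  "pv D a = Poly (map (\<lambda>i. if a i then 1 else 0) [0..<D])"

lemma coeff_pv: "coeff (pv D a) i = (if i < D \<and> a i then 1 else 0)"
  by (simp add: pv_def nth_default_def)

lemma bit_add_eq1: "((a::bit) + b = 1) \<longleftrightarrow> ((a = 1) \<noteq> (b = 1))"
  by (cases a; cases b) simp_all

lemma pv_vadd: "pv D (vadd a b) = pv D a + pv D b"
  by (rule poly_eqI) (auto simp: coeff_pv vadd_def)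

lemma pv_zv[simp]: "pv D zv = 0"
  by (rule poly_eqI) (simp add: coeff_pv zv_def)

lemma pv_inj: assumes "a \<in> cube D" "b \<in> cube D" "pv D a = pv D b" shows "a = b"
proof
  fix i
  have "coeff (pv D a) i = coeff (pv D b) i" using assms(3) by simp
  then show "a i = b i" using assms(1,2) unfolding cube_def
    by (cases "i < D") (auto simp: coeff_pv split: if_splits)
qed

lemma pv_eq0: "a \<in> cube D \<Longrightarrow> pv D a = 0 \<longleftrightarrow> a = zv"
  using pv_inj[of a D zv] by auto

lemma degree_pv: "degree (pv D a) \<le> D"
  by (rule degree_le) (simp add: coeff_pv)

definition low :: "nat \<Rightarrow> (nat \<Rightarrow> bool) \<Rightarrow> (nat \<Rightarrow> bool)" where "low t x = (\<lambda>i. i < t \<and> x i)"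
definition high :: "nat \<Rightarrow> (nat \<Rightarrow> bool) \<Rightarrow> (nat \<Rightarrow> bool)" where "high t x = (\<lambda>i. t \<le> i \<and> x i)"

lemma low_high: "vadd (low t x) (high t x) = x"
  unfolding vadd_def low_def high_def by (auto simp: fun_eq_iff)
lemma low_vadd: "low t (vadd x y) = vadd (low t x) (low t y)"
  unfolding vadd_def low_def by (auto simp: fun_eq_iff)
lemma high_vadd: "high t (vadd x y) = vadd (high t x) (high t y)"
  unfolding vadd_def high_def by (auto simp: fun_eq_iff)
lemma low_cube: "low t x \<in> cube t"
  unfolding low_def cube_def by auto
lemma high_cube: "x \<in> cube n \<Longrightarrow> high t x \<in> cube n"
  unfolding high_def cube_def by auto
lemma cube_mono: "t \<le> n \<Longrightarrow> cube t \<subseteq> cube n"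
  unfolding cube_def by auto
lemma low_of_cube: "a \<in> cube t \<Longrightarrow> low t a = a"
  unfolding low_def cube_def by (auto simp: fun_eq_iff not_le[symmetric])
lemma high_of_cube: "a \<in> cube t \<Longrightarrow> high t a = zv"
  unfolding high_def cube_def zv_def by (auto simp: fun_eq_iff)
lemma low_zv_iff: "low t x = zv \<longleftrightarrow> (\<forall>i<t. \<not> x i)"
  unfolding low_def zv_def by (auto simp: fun_eq_iff)
lemma low_zv[simp]: "low t zv = zv" and high_zv[simp]: "high t zv = zv"
  unfolding low_def high_def zv_def by auto
lemma vadd_solve: "vadd x y = vadd z w \<Longrightarrow> w = vadd (vadd x y) z"
  unfolding vadd_def by (auto simp: fun_eq_iff)

definition Sol :: "(nat \<Rightarrow> bool) set \<Rightarrow> ((nat \<Rightarrow> bool) \<times> (nat \<Rightarrow> bool) \<times> (nat \<Rightarrow> bool) \<times> (nat \<Rightarrow> bool)) set" where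
  "Sol B = {(r1, r2, r3, r4). r1 \<in> B \<and> r2 \<in> B \<and> r3 \<in> B \<and> r4 \<in> B \<and> vadd r1 r2 = vadd r3 r4}"

lemma T2_Sol: "T2 B = card (Sol B)" unfolding T2_def Sol_def ..

lemma Sol_sub: "Sol B \<subseteq> B \<times> B \<times> B \<times> B" unfolding Sol_def by auto

lemma finite_Sol: "finite B \<Longrightarrow> finite (Sol B)"
  by (rule finite_subset[OF Sol_sub]) simp

lemma T2_mono: "finite B' \<Longrightarrow> B \<subseteq> B' \<Longrightarrow> T2 B \<le> T2 B'"
  unfolding T2_Sol by (rule card_mono[OF finite_Sol]) (auto simp: Sol_def)

lemma divmod_aux: "q < (L::nat) \<Longrightarrow> (e * L + q) div L = e \<and> (e * L + q) mod L = q"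
  by (simp add: add.commute[of "e*L"])

locale constr =
  fixes t d n :: nat
  assumes dim: "t + 4 * (3*t + d + 1) \<le> n"
begin

abbreviation "LL \<equiv> 3*t + d + 1"

lemma tn: "t \<le> n" using dim by simp

definition hv :: "(nat \<Rightarrow> bit poly) \<Rightarrow> nat \<Rightarrow> bool" where
  "hv c = (\<lambda>i. t \<le> i \<and> (i - t) div LL < 4 \<and> coeff (c ((i - t) div LL)) ((i - t) mod LL) = 1)"

lemma hv_cube: "hv c \<in> cube n"
  unfolding cube_def
proof (intro CollectI allI impI notI)
  fix i assume i: "n \<le> i" and h: "hv c i"
  then have "4 * LL \<le> i - t" using dim by simp
  then have "\<not> ((i - t) div LL < 4)" by (subst div_less_iff_less_mult) auto
  then show False using h unfolding hv_def by simp
qed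

lemma low_hv: "low t (hv c) = zv" unfolding low_def hv_def zv_def by auto
lemma high_hv: "high t (hv c) = hv c" unfolding high_def hv_def by (auto simp: fun_eq_iff)

lemma hv_add: "vadd (hv c) (hv c') = hv (\<lambda>e. c e + c' e)"
  unfolding vadd_def hv_def by (auto simp: fun_eq_iff bit_add_eq1)

lemma hv_0: "hv (\<lambda>_. 0) = zv" unfolding hv_def zv_def by simp

lemma hv_eq_zv:
  assumes deg: "\<forall>e<4. degree (c e) < LL" and z: "hv c = zv"
  shows "\<forall>e<4. c e = 0"
proof (intro allI impI poly_eqI)
  fix e q :: nat assume e: "e < 4"
  show "coeff (c e) q = coeff 0 q"
  proof (cases "q < LL")
    case True
    have "hv c (t + (e * LL + q)) = False" using z by (simp add: zv_def)
    moreover have "(e*LL + q) div LL = e" "(e*LL+q) mod LL = q" using divmod_aux[OF True] by auto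
    ultimately have "coeff (c e) q \<noteq> 1" using e unfolding hv_def by simp
    then show ?thesis by simp
  next
    case False
    have "degree (c e) < q" using deg e False by force
    then show ?thesis by (simp add: coeff_eq_0)
  qed
qed

definition lam :: "(nat \<Rightarrow> bool) \<Rightarrow> bit poly" where "lam j = pv t j"
definition wv :: "(nat \<Rightarrow> bool) \<Rightarrow> bit poly \<Rightarrow> nat \<Rightarrow> bool" where
  "wv j X = hv (\<lambda>e. lam j ^ e * X)"

lemma deg_term: assumes "degree X \<le> d" "e < 4" shows "degree (lam j ^ e * X) < LL"
proof -
  have "degree (lam j ^ e * X) \<le> degree (lam j ^ e) + degree X" by (rule degree_mult_le)
  also have "\<dots> \<le> degree (lam j) * e + d" using degree_power_le[of "lam j" e] assms(1) by linarith
  also have "degree (lam j) * e \<le> t * 3"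
    using degree_pv[of t j] assms(2) unfolding lam_def by (intro mult_le_mono) auto
  finally show ?thesis by simp
qed

lemma deg_add: "degree p < LL \<Longrightarrow> degree q < LL \<Longrightarrow> degree (p + q) < LL"
  using degree_add_le_max[of p q] by simp

lemma wv_0[simp]: "wv j 0 = zv" unfolding wv_def by (simp add: hv_0)

lemma wv_add: "vadd (wv j X) (wv j Y) = wv j (X + Y)"
  unfolding wv_def hv_add by (simp add: distrib_left)

lemma wv_eq:
  assumes "degree X \<le> d" "degree Y \<le> d" "wv j X = wv j' Y"
  shows "X = Y \<and> (X \<noteq> 0 \<longrightarrow> lam j = lam j')"
proof -
  have "vadd (wv j X) (wv j' Y) = zv" using assms(3) by simp
  then have z: "hv (\<lambda>e. lam j ^ e * X + lam j' ^ e * Y) = zv" unfolding wv_def hv_add .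
  have "\<forall>e<4. degree (lam j ^ e * X + lam j' ^ e * Y) < LL"
    using deg_term assms(1,2) deg_add by blast
  from hv_eq_zv[OF this z] have h: "\<forall>e<4. lam j ^ e * X + lam j' ^ e * Y = 0" by simp
  from h[rule_format, of 0] have XY: "X = Y" by (simp add: bitpoly_sum0)
  from h[rule_format, of 1] XY have "(lam j + lam j') * X = 0" by (simp add: distrib_right)
  then have "X \<noteq> 0 \<longrightarrow> lam j = lam j'" by (simp add: bitpoly_sum0, blast)
  with XY show ?thesis by simp
qed

definition W :: "(nat \<Rightarrow> bool) \<Rightarrow> (nat \<Rightarrow> bool) set" where
  "W j = (\<lambda>a. wv j (pv d a)) ` cube d"
definition U :: "(nat \<Rightarrow> bool) set" where "U = (\<Union>j\<in>cube t. W j)"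

lemma W_zv: "zv \<in> W j"
  unfolding W_def by (rule image_eqI[of _ _ zv]) auto

lemma W_cube: "W j \<subseteq> cube n" unfolding W_def wv_def using hv_cube by auto
lemma finite_W[simp]: "finite (W j)" unfolding W_def by simp

lemma W_closed: "a \<in> W j \<Longrightarrow> b \<in> W j \<Longrightarrow> vadd a b \<in> W j"
  unfolding W_def by (auto simp: wv_add pv_vadd[symmetric] vadd_cube)

lemma lam_inj: "j \<in> cube t \<Longrightarrow> j' \<in> cube t \<Longrightarrow> lam j = lam j' \<Longrightarrow> j = j'"
  unfolding lam_def by (rule pv_inj)

lemma card_W: "card (W j) = 2 ^ d"
proof -
  have "inj_on (\<lambda>a. wv j (pv d a)) (cube d)"
    by (rule inj_onI) (metis wv_eq degree_pv pv_inj)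
  then show ?thesis unfolding W_def by (simp add: card_image card_cube)
qed

lemma W_low: "w \<in> W j \<Longrightarrow> low t w = zv" unfolding W_def wv_def by (auto simp: low_hv)
lemma W_high: "w \<in> W j \<Longrightarrow> high t w = w" unfolding W_def wv_def by (auto simp: high_hv)

lemma W_disj:
  assumes "j \<in> cube t" "j' \<in> cube t" "w \<in> W j" "w \<in> W j'" "w \<noteq> zv"
  shows "j = j'"
proof -
  obtain a b where ab: "a \<in> cube d" "b \<in> cube d" "w = wv j (pv d a)" "w = wv j' (pv d b)"
    using assms(3,4) unfolding W_def by auto
  then have h: "pv d a = pv d b \<and> (pv d a \<noteq> 0 \<longrightarrow> lam j = lam j')"
    using wv_eq degree_pv by metis
  have "pv d a \<noteq> 0" using ab assms(5) by auto
  then show ?thesis using h lam_inj assms(1,2) by blast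
qed

lemma finite_U[simp]: "finite U" unfolding U_def by simp
lemma U_cube: "U \<subseteq> cube n" unfolding U_def using W_cube by auto
lemma zv_U: "zv \<in> U" unfolding U_def using W_zv zv_cube by blast
lemma card_U: "card U \<le> 2^t * 2^d"
proof -
  have "card U \<le> (\<Sum>j\<in>cube t. card (W j))" unfolding U_def by (rule card_UN_le) simp
  also have "\<dots> = 2^t * 2^d" by (simp add: card_W card_cube)
  finally show ?thesis .
qed
lemma U_low: "u \<in> U \<Longrightarrow> low t u = zv" unfolding U_def using W_low by auto
lemma U_high: "u \<in> U \<Longrightarrow> high t u = u" unfolding U_def using W_high by auto

end

context constr
begin

definition A :: "(nat \<Rightarrow> bool) set" where
  "A = {x \<in> cube n. \<forall>w\<in>W (low t x). chi n w x = 1}"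

lemma A_sub: "A \<subseteq> cube n" unfolding A_def by auto

lemma ind_A:
  assumes x: "x \<in> cube n"
  shows "(if x \<in> A then 1 else 0) = (1 / 2^d) * (\<Sum>w\<in>W (low t x). chi n w x)"
  using group_sum[of "W (low t x)" n x] W_closed x unfolding A_def by (simp add: card_W)

lemma low_eq_iff: "j \<in> cube t \<Longrightarrow> (\<forall>i<t. \<not> vadd x j i) \<longleftrightarrow> low t x = j"
  unfolding vadd_def low_def cube_def by (auto simp: fun_eq_iff, (metis not_le)+)

lemma ind_A2:
  assumes x: "x \<in> cube n"
  shows "(if x \<in> A then 1 else 0) = (1 / (2^t * 2^d)) *
     (\<Sum>j\<in>cube t. \<Sum>a\<in>cube t. \<Sum>w\<in>W j. chi n a x * chi n a j * chi n w x)"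
proof -
  have "(\<Sum>j\<in>cube t. \<Sum>a\<in>cube t. \<Sum>w\<in>W j. chi n a x * chi n a j * chi n w x)
      = (\<Sum>j\<in>cube t. (\<Sum>a\<in>cube t. chi n a (vadd x j)) * (\<Sum>w\<in>W j. chi n w x))"
    by (simp add: chi_vadd sum_product)
  also have "\<dots> = (\<Sum>j\<in>cube t. (if j = low t x then 2^t * (\<Sum>w\<in>W j. chi n w x) else 0))"
    by (intro sum.cong refl) (auto simp: cube_sum[OF tn] low_eq_iff)
  also have "\<dots> = 2^t * (\<Sum>w\<in>W (low t x). chi n w x)"
    by (simp add: low_cube)
  finally show ?thesis using ind_A[OF x] by simp
qed

lemma vadd_decomp:
  assumes a: "a \<in> cube t" and w: "w \<in> W j"
  shows "r = vadd a w \<longleftrightarrow> a = low t r \<and> w = high t r"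
proof
  assume "r = vadd a w"
  then show "a = low t r \<and> w = high t r"
    using a w by (simp add: low_vadd high_vadd low_of_cube high_of_cube W_low W_high)
next
  assume "a = low t r \<and> w = high t r"
  then show "r = vadd a w" by (simp add: low_high)
qed

lemma sum_x: "v \<in> cube n \<Longrightarrow> (\<Sum>x\<in>cube n. chi n v x) = (if v = zv then 2^n else 0)"
proof -
  assume v: "v \<in> cube n"
  have "(\<Sum>x\<in>cube n. chi n v x) = (\<Sum>x\<in>cube n. chi n x v)"
    by (rule sum.cong[OF refl chi_sym])
  also have "\<dots> = (if \<forall>i<n. \<not> v i then 2^n else 0)" by (rule cube_sum[OF order.refl])
  also have "(\<forall>i<n. \<not> v i) \<longleftrightarrow> v = zv" using v unfolding cube_def zv_def
    by (auto simp: fun_eq_iff, meson not_le)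
  finally show ?thesis .
qed

lemma fourier_A:
  assumes r: "r \<in> cube n"
  shows "fourier_ind n A r = (2^n / (2^t * 2^d)) *
     (\<Sum>j\<in>cube t. if high t r \<in> W j then chi n (low t r) j else 0)"
proof -
  define K :: real where "K = 2^t * 2^d"
  have "fourier_ind n A r = (\<Sum>x\<in>cube n. chi n r x * (if x \<in> A then 1 else 0))"
    unfolding fourier_ind_def chi_def by simp
  also have "\<dots> = (\<Sum>x\<in>cube n. chi n r x * ((1 / K) *
     (\<Sum>j\<in>cube t. \<Sum>a\<in>cube t. \<Sum>w\<in>W j. chi n a x * chi n a j * chi n w x)))"
    unfolding K_def by (intro sum.cong refl) (simp add: ind_A2)
  also have "\<dots> = (1 / K) * (\<Sum>x\<in>cube n. \<Sum>j\<in>cube t. \<Sum>a\<in>cube t. \<Sum>w\<in>W j.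
       chi n a j * chi n (vadd r (vadd a w)) x)"
    by (simp add: sum_distrib_left chi_vadd1 mult_ac)
  also have "\<dots> = (1 / K) * (\<Sum>j\<in>cube t. \<Sum>a\<in>cube t. \<Sum>w\<in>W j.
       chi n a j * (\<Sum>x\<in>cube n. chi n (vadd r (vadd a w)) x))"
    by (simp only: sum.swap[of _ "cube n"] sum_distrib_left)
  also have "\<dots> = (1 / K) * (\<Sum>j\<in>cube t. \<Sum>a\<in>cube t. \<Sum>w\<in>W j.
       (if a = low t r then (if w = high t r then chi n a j * 2^n else 0) else 0))"
  proof -
    have "chi n a j * (\<Sum>x\<in>cube n. chi n (vadd r (vadd a w)) x)
       = (if a = low t r then (if w = high t r then chi n a j * 2^n else 0) else 0)"
      if "j \<in> cube t" "a \<in> cube t" "w \<in> W j" for j a w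
    proof -
      have "vadd r (vadd a w) \<in> cube n"
        using r that cube_mono[OF tn] W_cube by (blast intro: vadd_cube)
      moreover have "vadd r (vadd a w) = zv \<longleftrightarrow> a = low t r \<and> w = high t r"
        using vadd_decomp[OF that(2,3), of r] by (simp add: vadd_eq_zv)
      ultimately show ?thesis by (simp add: sum_x)
    qed
    then show ?thesis by (intro arg_cong[where f="\<lambda>z. (1/K) * z"] sum.cong refl) auto
  qed
  also have "\<dots> = (1 / K) * (\<Sum>j\<in>cube t. if high t r \<in> W j then chi n (low t r) j * 2^n else 0)"
  proof -
    have i1: "(\<Sum>w\<in>W j. (if a = low t r then (if w = high t r then chi n a j * 2^n else 0) else 0))
        = (if a = low t r then (if high t r \<in> W j then chi n a j * 2^n else 0) else 0)" for j a
      by (cases "a = low t r") simp_all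
    have i2: "(\<Sum>a\<in>cube t. (if a = low t r then (if high t r \<in> W j then chi n a j * 2^n else 0) else 0))
        = (if high t r \<in> W j then chi n (low t r) j * 2^n else 0)" for j
      by (simp add: low_cube)
    show ?thesis by (simp only: i1 i2)
  qed
  also have "\<dots> = (2^n / K) * (\<Sum>j\<in>cube t. if high t r \<in> W j then chi n (low t r) j else 0)"
  proof -
    have "(1/K) * (if high t r \<in> W j then chi n (low t r) j * 2^n else 0)
       = (2^n/K) * (if high t r \<in> W j then chi n (low t r) j else 0)" for j
      by simp
    then show ?thesis by (simp only: sum_distrib_left)
  qed
  finally show ?thesis unfolding K_def .
qed

end

lemma abs_chi[simp]: "\<bar>chi n r x\<bar> = 1"
  using chi_pm[of n r x] by auto

context constr
begin

lemma SW_zero: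
  assumes "high t r = zv"
  shows "(\<Sum>j\<in>cube t. if high t r \<in> W j then chi n (low t r) j else 0) = (if low t r = zv then 2^t else 0)"
proof -
  have "(\<Sum>j\<in>cube t. if high t r \<in> W j then chi n (low t r) j else 0) = (\<Sum>j\<in>cube t. chi n (low t r) j)"
    using assms W_zv by simp
  also have "\<dots> = (\<Sum>j\<in>cube t. chi n j (low t r))" by (rule sum.cong[OF refl chi_sym])
  also have "\<dots> = (if \<forall>i<t. \<not> low t r i then 2^t else 0)" by (rule cube_sum[OF tn])
  also have "(\<forall>i<t. \<not> low t r i) \<longleftrightarrow> low t r = zv" unfolding low_def zv_def by (auto simp: fun_eq_iff)
  finally show ?thesis .
qed

lemma SW_one:
  assumes "j0 \<in> cube t" "high t r \<in> W j0" "high t r \<noteq> zv"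
  shows "(\<Sum>j\<in>cube t. if high t r \<in> W j then chi n (low t r) j else 0) = chi n (low t r) j0"
proof -
  have "(\<Sum>j\<in>cube t. if high t r \<in> W j then chi n (low t r) j else 0)
      = (\<Sum>j\<in>cube t. if j = j0 then chi n (low t r) j0 else 0)"
    by (intro sum.cong refl) (use W_disj assms in auto)
  then show ?thesis using assms(1) by simp
qed

lemma SW_none:
  assumes "high t r \<notin> U"
  shows "(\<Sum>j\<in>cube t. if high t r \<in> W j then chi n (low t r) j else 0) = 0"
  using assms unfolding U_def by (intro sum.neutral) auto

lemma card_A: "real (card A) = 2^n / 2^d"
proof -
  have ip0: "ip n zv x = 0" for x unfolding ip_def zv_def by simp
  have "fourier_ind n A zv = (\<Sum>x\<in>cube n. if x \<in> A then 1 else 0)"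
    unfolding fourier_ind_def by (simp add: ip0)
  also have "\<dots> = real (card (cube n \<inter> A))"
    by (simp add: sum.inter_restrict[symmetric])
  also have "cube n \<inter> A = A" using A_sub by auto
  finally have "real (card A) = fourier_ind n A zv" by simp
  also have "\<dots> = 2^n / (2^t * 2^d) * 2^t"
    unfolding fourier_A[OF zv_cube] using SW_zero[of zv] by simp
  finally show ?thesis by simp
qed

lemma four_big:
  assumes "r \<in> cube n" "high t r \<in> U" "high t r \<noteq> zv"
  shows "\<bar>fourier_ind n A r\<bar> = 2^n / (2^t * 2^d)"
proof -
  obtain j0 where "j0 \<in> cube t" "high t r \<in> W j0" using assms(2) unfolding U_def by auto
  then show ?thesis unfolding fourier_A[OF assms(1)] using SW_one assms(3) by (simp add: abs_mult)
qed

lemma four_zero: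
  assumes "r \<in> cube n" "high t r \<notin> U"
  shows "fourier_ind n A r = 0"
  unfolding fourier_A[OF assms(1)] using SW_none[OF assms(2)] by simp

definition Big where "Big = {r \<in> cube n. high t r \<in> U \<and> high t r \<noteq> zv}"
definition Z where "Z = {r \<in> cube n. high t r \<in> U}"

lemma spec_lower:
  assumes "0 < \<alpha>" "\<alpha> * (2^t * 2^d) \<le> 1"
  shows "Big \<subseteq> large_spec n \<alpha> A"
proof
  fix r assume r: "r \<in> Big"
  have K: "(0::real) < 2^t * 2^d" by simp
  have "\<alpha> * 2^n \<le> 2^n / (2^t * 2^d)"
    using assms(2) K by (simp add: field_simps)
  then show "r \<in> large_spec n \<alpha> A" using r four_big unfolding Big_def large_spec_def by auto
qed

lemma spec_upper:
  assumes "0 < \<alpha>"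
  shows "large_spec n \<alpha> A \<subseteq> Z"
proof
  fix r assume r: "r \<in> large_spec n \<alpha> A"
  then have rc: "r \<in> cube n" unfolding large_spec_def by auto
  show "r \<in> Z"
  proof (rule ccontr)
    assume "r \<notin> Z"
    then have "fourier_ind n A r = 0" using four_zero rc unfolding Z_def by auto
    moreover have "\<alpha> * 2^n > 0" using assms by simp
    ultimately show False using r unfolding large_spec_def by auto
  qed
qed

lemma card_Uz: "card (U - {zv}) = 2^t * (2^d - 1)"
proof -
  have "U - {zv} = (\<Union>j\<in>cube t. W j - {zv})" unfolding U_def by auto
  also have "card \<dots> = (\<Sum>j\<in>cube t. card (W j - {zv}))"
    by (rule card_UN_disjoint) (use W_disj in auto)
  also have "\<dots> = 2^t * (2^d - 1)" by (simp add: card_Diff_singleton W_zv card_W card_cube)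
  finally show ?thesis .
qed

lemma card_Big: "2^t * (2^t * (2^d - 1)) \<le> card Big"
proof -
  have fin: "finite Big" unfolding Big_def by simp
  have inj: "inj_on (\<lambda>(a, u). vadd a u) (cube t \<times> (U - {zv}))"
  proof (rule inj_onI)
    fix x y assume x: "x \<in> cube t \<times> (U - {zv})" and y: "y \<in> cube t \<times> (U - {zv})"
      and e: "(\<lambda>(a, u). vadd a u) x = (\<lambda>(a, u). vadd a u) y"
    obtain a u where xa: "x = (a, u)" by (cases x)
    obtain a' u' where ya: "y = (a', u')" by (cases y)
    have h: "a \<in> cube t" "u \<in> U" "a' \<in> cube t" "u' \<in> U" "vadd a u = vadd a' u'"
      using x y e unfolding xa ya by auto
    have "low t (vadd a u) = a" "low t (vadd a' u') = a'"
      using h(1-4) by (simp_all add: low_vadd low_of_cube U_low)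
    then have aa: "a = a'" using h(5) by metis
    then show "x = y" unfolding xa ya using aa h(5) by (simp add: vadd_cancel)
  qed
  have sub: "(\<lambda>(a, u). vadd a u) ` (cube t \<times> (U - {zv})) \<subseteq> Big"
  proof
    fix z assume "z \<in> (\<lambda>(a, u). vadd a u) ` (cube t \<times> (U - {zv}))"
    then obtain a u where h: "a \<in> cube t" "u \<in> U" "u \<noteq> zv" and z: "z = vadd a u" by auto
    have "a \<in> cube n" "u \<in> cube n" using h cube_mono[OF tn] U_cube by auto
    moreover have "high t (vadd a u) = u" using h by (simp add: high_vadd high_of_cube U_high)
    ultimately show "z \<in> Big" using h unfolding Big_def z by (simp add: vadd_cube)
  qed
  have "card (cube t \<times> (U - {zv})) \<le> card Big" by (rule card_inj_on_le[OF inj sub fin])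
  then show ?thesis by (simp add: card_cartesian_product card_cube card_Uz)
qed

end

context constr
begin

lemma U_elem: "u \<in> U \<Longrightarrow> \<exists>j a. j \<in> cube t \<and> a \<in> cube d \<and> u = wv j (pv d a)"
  unfolding U_def W_def by auto

lemma memW:
  assumes "j \<in> cube t" "j' \<in> cube t" "a \<in> cube d" "pv d a \<noteq> 0 \<longrightarrow> lam j = lam j'"
  shows "wv j (pv d a) \<in> W j'"
proof (cases "pv d a = 0")
  case True then show ?thesis using W_zv by simp
next
  case False
  then have "j = j'" using assms lam_inj by blast
  then show ?thesis using assms(3) unfolding W_def by auto
qed

lemma eqW:
  assumes "eqp (pv d a) (lam j) (pv d b) (lam j')"
  shows "wv j (pv d a) = wv j' (pv d b)"
proof (cases "pv d a = 0")
  case True then show ?thesis using assms unfolding eqp_def by simp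
next
  case False then show ?thesis using assms unfolding eqp_def wv_def by simp
qed

lemma sol_class:
  assumes u: "u1 \<in> U" "u2 \<in> U" "u3 \<in> U" "u4 \<in> U" and e: "vadd u1 u2 = vadd u3 u4"
  shows "(\<exists>j\<in>cube t. u1 \<in> W j \<and> u2 \<in> W j \<and> u3 \<in> W j) \<or> (u1 = u2 \<and> u3 = u4)
    \<or> (u1 = u3 \<and> u2 = u4) \<or> (u1 = u4 \<and> u2 = u3)"
proof -
  obtain j1 a1 where 1: "j1 \<in> cube t" "a1 \<in> cube d" "u1 = wv j1 (pv d a1)" using U_elem u(1) by blast
  obtain j2 a2 where 2: "j2 \<in> cube t" "a2 \<in> cube d" "u2 = wv j2 (pv d a2)" using U_elem u(2) by blast
  obtain j3 a3 where 3: "j3 \<in> cube t" "a3 \<in> cube d" "u3 = wv j3 (pv d a3)" using U_elem u(3) by blast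
  obtain j4 a4 where 4: "j4 \<in> cube t" "a4 \<in> cube d" "u4 = wv j4 (pv d a4)" using U_elem u(4) by blast
  have "vadd (vadd u1 u2) (vadd u3 u4) = zv" using e by simp
  then have z: "hv (\<lambda>e. (lam j1 ^ e * pv d a1 + lam j2 ^ e * pv d a2) + (lam j3 ^ e * pv d a3 + lam j4 ^ e * pv d a4)) = zv"
    unfolding 1(3) 2(3) 3(3) 4(3) wv_def hv_add .
  have dg: "\<forall>e<4. degree ((lam j1 ^ e * pv d a1 + lam j2 ^ e * pv d a2) + (lam j3 ^ e * pv d a3 + lam j4 ^ e * pv d a4)) < LL"
  proof (intro allI impI)
    fix e :: nat assume e: "e < 4"
    note dt = deg_term[OF degree_pv e]
    show "degree ((lam j1 ^ e * pv d a1 + lam j2 ^ e * pv d a2) + (lam j3 ^ e * pv d a3 + lam j4 ^ e * pv d a4)) < LL"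
      by (intro deg_add dt)
  qed
  from hv_eq_zv[OF dg z]
  have "\<forall>e<4. pv d a1 * lam j1 ^ e + pv d a2 * lam j2 ^ e + pv d a3 * lam j3 ^ e + pv d a4 * lam j4 ^ e = 0"
    by (simp add: mult.commute add.assoc)
  from four_lemma[OF this]
  consider (P) "(pv d a1 \<noteq> 0 \<and> pv d a2 \<noteq> 0 \<longrightarrow> lam j1 = lam j2) \<and> (pv d a1 \<noteq> 0 \<and> pv d a3 \<noteq> 0 \<longrightarrow> lam j1 = lam j3)
       \<and> (pv d a2 \<noteq> 0 \<and> pv d a3 \<noteq> 0 \<longrightarrow> lam j2 = lam j3)"
    | (A) "eqp (pv d a1) (lam j1) (pv d a2) (lam j2) \<and> eqp (pv d a3) (lam j3) (pv d a4) (lam j4)"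
    | (B) "eqp (pv d a1) (lam j1) (pv d a3) (lam j3) \<and> eqp (pv d a2) (lam j2) (pv d a4) (lam j4)"
    | (C) "eqp (pv d a1) (lam j1) (pv d a4) (lam j4) \<and> eqp (pv d a2) (lam j2) (pv d a3) (lam j3)"
    by blast
  then show ?thesis
  proof cases
    case P
    have "\<exists>j\<in>cube t. u1 \<in> W j \<and> u2 \<in> W j \<and> u3 \<in> W j"
    proof (cases "pv d a1 \<noteq> 0")
      case True
      then show ?thesis using P 1 2 3 by (intro bexI[of _ j1]) (auto intro!: memW simp: W_zv)
    next
      case F1: False
      show ?thesis
      proof (cases "pv d a2 \<noteq> 0")
        case True
        then show ?thesis using P F1 1 2 3 by (intro bexI[of _ j2]) (auto intro!: memW simp: W_zv)
      next
        case F2: False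
        show ?thesis using P F1 F2 1 2 3 by (intro bexI[of _ j3]) (auto intro!: memW simp: W_zv)
      qed
    qed
    then show ?thesis by blast
  next
    case A then show ?thesis using eqW 1 2 3 4 by metis
  next
    case B then show ?thesis using eqW 1 2 3 4 by metis
  next
    case C then show ?thesis using eqW 1 2 3 4 by metis
  qed
qed

lemma card_SolU: "card (Sol U) \<le> 2^t * (2^d)^3 + 3 * (2^t * 2^d)^2"
proof -
  define S1 where "S1 = (\<Union>j\<in>cube t. (\<lambda>(a, b, c). (a, b, c, vadd (vadd a b) c)) ` (W j \<times> W j \<times> W j))"
  define S2 where "S2 = (\<lambda>(a, b). (a, a, b, b)) ` (U \<times> U)"
  define S3 where "S3 = (\<lambda>(a, b). (a, b, a, b)) ` (U \<times> U)"
  define S4 where "S4 = (\<lambda>(a, b). (a, b, b, a)) ` (U \<times> U)"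
  have sub: "Sol U \<subseteq> S1 \<union> S2 \<union> S3 \<union> S4"
  proof
    fix s assume s: "s \<in> Sol U"
    obtain u1 u2 u3 u4 where su: "s = (u1, u2, u3, u4)" by (cases s)
    have h: "u1 \<in> U" "u2 \<in> U" "u3 \<in> U" "u4 \<in> U" "vadd u1 u2 = vadd u3 u4"
      using s unfolding su Sol_def by auto
    have u4: "u4 = vadd (vadd u1 u2) u3" using vadd_solve[OF h(5)] .
    from sol_class[OF h] show "s \<in> S1 \<union> S2 \<union> S3 \<union> S4"
    proof (elim disjE)
      assume "\<exists>j\<in>cube t. u1 \<in> W j \<and> u2 \<in> W j \<and> u3 \<in> W j"
      then obtain j where j: "j \<in> cube t" "u1 \<in> W j" "u2 \<in> W j" "u3 \<in> W j" by blast
      have "s = (\<lambda>(a, b, c). (a, b, c, vadd (vadd a b) c)) (u1, u2, u3)" unfolding su u4 by simp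
      then have "s \<in> (\<lambda>(a, b, c). (a, b, c, vadd (vadd a b) c)) ` (W j \<times> W j \<times> W j)"
        using j by blast
      then show ?thesis unfolding S1_def using j(1) by blast
    next
      assume "u1 = u2 \<and> u3 = u4"
      then show ?thesis unfolding S2_def su using h by auto
    next
      assume "u1 = u3 \<and> u2 = u4"
      then show ?thesis unfolding S3_def su using h by auto
    next
      assume "u1 = u4 \<and> u2 = u3"
      then show ?thesis unfolding S4_def su using h by auto
    qed
  qed
  have f: "finite S1" "finite S2" "finite S3" "finite S4" unfolding S1_def S2_def S3_def S4_def by auto
  have c1: "card S1 \<le> 2^t * (2^d)^3"
  proof -
    have "card S1 \<le> (\<Sum>j\<in>cube t. card ((\<lambda>(a, b, c). (a, b, c, vadd (vadd a b) c)) ` (W j \<times> W j \<times> W j)))"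
      unfolding S1_def by (rule card_UN_le) simp
    also have "\<dots> \<le> (\<Sum>j\<in>cube t. card (W j \<times> W j \<times> W j))"
      by (intro sum_mono card_image_le) simp
    also have "\<dots> = 2^t * (2^d)^3" by (simp add: card_cartesian_product card_W card_cube power3_eq_cube)
    finally show ?thesis .
  qed
  have cUU: "card (U \<times> U) \<le> (2^t * 2^d)^2"
    using card_U by (simp add: card_cartesian_product power2_eq_square mult_le_mono)
  have c2: "card S2 \<le> (2^t * 2^d)^2" unfolding S2_def by (rule order_trans[OF card_image_le cUU]) simp
  have c3: "card S3 \<le> (2^t * 2^d)^2" unfolding S3_def by (rule order_trans[OF card_image_le cUU]) simp
  have c4: "card S4 \<le> (2^t * 2^d)^2" unfolding S4_def by (rule order_trans[OF card_image_le cUU]) simp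
  have "card (Sol U) \<le> card (S1 \<union> S2 \<union> S3 \<union> S4)" by (rule card_mono) (use f sub in auto)
  also have "\<dots> \<le> card S1 + card S2 + card S3 + card S4"
    by (meson card_Un_le add_le_mono order_trans le_refl)
  finally show ?thesis using c1 c2 c3 c4 by linarith
qed

lemma T2_Z: "T2 Z \<le> 2^t * 2^t * 2^t * card (Sol U)"
proof -
  define F where "F = (\<lambda>((a1, a2, a3), (u1, u2, u3, u4)). (vadd a1 u1, vadd a2 u2, vadd a3 u3, vadd (vadd (vadd a1 a2) a3) u4))"
  have sub: "Sol Z \<subseteq> F ` ((cube t \<times> cube t \<times> cube t) \<times> Sol U)"
  proof
    fix s assume s: "s \<in> Sol Z"
    obtain r1 r2 r3 r4 where su: "s = (r1, r2, r3, r4)" by (cases s)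
    have h: "r1 \<in> Z" "r2 \<in> Z" "r3 \<in> Z" "r4 \<in> Z" "vadd r1 r2 = vadd r3 r4"
      using s unfolding su Sol_def by auto
    have hl: "vadd (low t r1) (low t r2) = vadd (low t r3) (low t r4)"
      using arg_cong[OF h(5), of "low t"] by (simp add: low_vadd)
    have hh: "vadd (high t r1) (high t r2) = vadd (high t r3) (high t r4)"
      using arg_cong[OF h(5), of "high t"] by (simp add: high_vadd)
    have l4: "low t r4 = vadd (vadd (low t r1) (low t r2)) (low t r3)" by (rule vadd_solve[OF hl])
    have "((low t r1, low t r2, low t r3), (high t r1, high t r2, high t r3, high t r4))
        \<in> (cube t \<times> cube t \<times> cube t) \<times> Sol U"
      using h hh unfolding Z_def Sol_def by (auto simp: low_cube)
    moreover have "s = F ((low t r1, low t r2, low t r3), (high t r1, high t r2, high t r3, high t r4))"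
      unfolding F_def su by (simp add: low_high flip: l4)
    ultimately show "s \<in> F ` ((cube t \<times> cube t \<times> cube t) \<times> Sol U)" by blast
  qed
  have "T2 Z = card (Sol Z)" by (rule T2_Sol)
  also have "\<dots> \<le> card (F ` ((cube t \<times> cube t \<times> cube t) \<times> Sol U))"
    by (rule card_mono[OF _ sub]) (simp add: finite_Sol)
  also have "\<dots> \<le> card ((cube t \<times> cube t \<times> cube t) \<times> Sol U)"
    by (rule card_image_le) (simp add: finite_Sol)
  also have "\<dots> = 2^t * 2^t * 2^t * card (Sol U)" by (simp add: card_cartesian_product card_cube)
  finally show ?thesis .
qed

theorem constr_main:
  assumes "0 < \<alpha>" "\<alpha> * (2^t * 2^d) \<le> 1"
  shows "A \<subseteq> cube n \<and> real (card A) = 2^n / 2^d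
    \<and> 2^t * (2^t * (2^d - 1)) \<le> card (large_spec n \<alpha> A)
    \<and> T2 (large_spec n \<alpha> A) \<le> 2^t * 2^t * 2^t * (2^t * (2^d)^3 + 3 * (2^t * 2^d)^2)"
proof (intro conjI)
  show "A \<subseteq> cube n" by (rule A_sub)
  show "real (card A) = 2^n / 2^d" by (rule card_A)
  have fl: "finite (large_spec n \<alpha> A)" unfolding large_spec_def by simp
  show "2^t * (2^t * (2^d - 1)) \<le> card (large_spec n \<alpha> A)"
    using card_Big card_mono[OF fl spec_lower[OF assms]] by linarith
  have "T2 (large_spec n \<alpha> A) \<le> T2 Z"
    by (rule T2_mono) (use spec_upper[OF assms(1)] in \<open>auto simp: Z_def\<close>)
  also have "\<dots> \<le> 2^t * 2^t * 2^t * card (Sol U)" by (rule T2_Z)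
  also have "\<dots> \<le> 2^t * 2^t * 2^t * (2^t * (2^d)^3 + 3 * (2^t * 2^d)^2)"
    using card_SolU by simp
  finally show "T2 (large_spec n \<alpha> A) \<le> 2^t * 2^t * 2^t * (2^t * (2^d)^3 + 3 * (2^t * 2^d)^2)" .
qed

end

lemma pow2_ivl:
  assumes "(y::real) \<ge> 1"
  shows "\<exists>d::nat. 2^d \<le> y \<and> y < 2^(d+1)"
proof -
  have "nat \<lfloor>y\<rfloor> \<ge> 1" using assms by linarith
  from ex_power_ivl1[OF _ this, of 2] obtain d where d: "2^d \<le> nat \<lfloor>y\<rfloor>" "nat \<lfloor>y\<rfloor> < 2^(d+1)" by auto
  have fl: "\<lfloor>y\<rfloor> \<ge> 1" using assms by linarith
  have i1: "(2::int)^d \<le> \<lfloor>y\<rfloor>" using d(1) fl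
    by (metis int_nat_eq of_nat_le_iff of_nat_numeral of_nat_power order.trans order_refl zero_le_one)
  have i2: "\<lfloor>y\<rfloor> < (2::int)^(d+1)" using d(2) fl
    by (metis int_nat_eq of_nat_less_iff of_nat_numeral of_nat_power order.trans zero_le_one)
  have "2^d \<le> y" using i1 by (metis le_floor_iff of_int_numeral of_int_power)
  moreover have "y < 2^(d+1)" using i2 by (metis floor_less_iff of_int_numeral of_int_power)
  ultimately show ?thesis by blast
qed

lemma lin_aux: "(tt::real) \<ge> 0 \<Longrightarrow> (dd::real) \<ge> 0 \<Longrightarrow> tt + dd \<le> (xx::real) \<Longrightarrow> 100 * xx \<le> (nn::real) \<Longrightarrow> 3000 \<le> nn
   \<Longrightarrow> 13 * tt + 4 * dd + 4 \<le> nn"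
  by linarith

theorem theorem28:
  fixes n :: nat and \<delta> \<alpha> :: real
  assumes "n \<ge> 1"
    and "0 < \<delta>" "\<delta> \<le> 1" "0 < \<alpha>" "\<alpha> \<le> 1"
    and "32 * \<delta>^2 \<le> \<alpha>" "\<alpha> \<le> \<delta> / 2"
    and "\<alpha> \<ge> (2 ^ n :: real) powr (- (2 powr (-300)))"
    and "\<alpha> \<le> 2 powr (-30)"
    and "\<delta> / \<alpha> * log 2 (1 / (2 * \<alpha>))
           \<ge> 400 * log 2 (2 ^ n) * log 2 (8 * log 2 (2 ^ n))"
  shows "\<exists>A \<subseteq> cube n.
           \<delta> * 2 ^ n \<le> real (card A) \<and> real (card A) \<le> 8 * \<delta> * 2 ^ n \<and>
           real (card (large_spec n \<alpha> A)) \<ge> \<delta> / (8 * \<alpha>^2) \<and>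
           real (T2 (large_spec n \<alpha> A)) \<le> 16 * \<delta> / \<alpha>^4"
proof -
  note dpos = assms(2) and apos = assms(4)
  have d64: "\<delta> \<le> 1/64"
  proof -
    have "32 * \<delta>^2 \<le> \<delta> / 2" using assms(6,7) by linarith
    then have "32 * \<delta> * \<delta> \<le> \<delta> * (1/2)" by (simp add: power2_eq_square)
    then show ?thesis using dpos by (simp add: mult.commute[of 32])
  qed
  have "1 \<le> 1 / \<delta>" using assms(2,3) by simp
  from pow2_ivl[OF this] obtain d :: nat where d: "2^d \<le> 1/\<delta>" "1/\<delta> < 2^(d+1)" by blast
  define m :: real where "m = 2^d"
  have mpos: "0 < m" unfolding m_def by simp
  have dm1: "\<delta> * m \<le> 1" using d(1) dpos unfolding m_def by (simp add: field_simps)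
  have dm2: "1 < 2 * \<delta> * m" using d(2) dpos unfolding m_def by (simp add: field_simps)
  have "1 \<le> 1 / (\<alpha> * m)"
  proof -
    have "\<alpha> * m \<le> (\<delta>/2) * m" using assms(7) mpos by (simp add: mult_right_mono)
    also have "\<dots> \<le> 1/2" using dm1 by simp
    finally show ?thesis using apos mpos by (simp add: field_simps)
  qed
  from pow2_ivl[OF this] obtain t :: nat where t: "2^t \<le> 1/(\<alpha> * m)" "1/(\<alpha> * m) < 2^(t+1)" by blast
  define k :: real where "k = 2^t"
  have kpos: "0 < k" unfolding k_def by simp
  have ak1: "\<alpha> * (k * m) \<le> 1" using t(1) apos mpos unfolding k_def by (simp add: field_simps)
  have ak2: "1 < 2 * (\<alpha> * (k * m))" using t(2) apos mpos unfolding k_def by (simp add: field_simps)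
  define s :: real where "s = 2 powr (-300)"
  have spos: "0 < s" unfolding s_def by simp
  have s100: "s \<le> 1/100" unfolding s_def by (simp add: powr_minus powr_numeral)
  have e1: "(2 ^ n :: real) powr (- s) = 2 powr (- (real n * s))"
    by (simp add: powr_realpow[symmetric] powr_powr)
  have inv: "1 / \<alpha> \<le> 2 powr (real n * s)"
  proof -
    have "2 powr (- (real n * s)) \<le> \<alpha>" using assms(8) e1 unfolding s_def by simp
    then have "1 / \<alpha> \<le> 1 / 2 powr (- (real n * s))" using apos by (simp add: frac_le)
    then show ?thesis by (simp add: powr_minus divide_inverse)
  qed
  have "2 powr real (t + d) \<le> 2 powr (real n * s)"
  proof -
    have "2 powr real (t + d) = (2::real)^(t + d)" by (rule powr_realpow) simp
    also have "\<dots> = k * m" unfolding k_def m_def by (simp add: power_add)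
    also have "\<dots> \<le> 1 / \<alpha>" using ak1 apos by (simp add: field_simps)
    finally show ?thesis using inv by linarith
  qed
  then have td: "real (t + d) \<le> real n * s" by simp
  have "2 powr 30 \<le> 2 powr (real n * s)"
  proof -
    have "2 powr (-30) * 2 powr 30 = (1::real)" by (subst powr_add[symmetric]) simp
    then have "2 powr 30 \<le> 1 / \<alpha>" using assms(9) apos
      by (simp add: field_simps)
    then show ?thesis using inv by linarith
  qed
  then have n30: "30 \<le> real n * s" using powr_le_cancel_iff[of 2 30 "real n * s"] by simp
  have ns: "real n * s \<le> real n * (1/100)" using s100 by (intro mult_left_mono) auto
  have n3: "real n \<ge> 3000" using n30 ns by linarith
  have "100 * (real n * s) \<le> real n" using ns by simp
  then have r: "13 * real t + 4 * real d + 4 \<le> real n"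
    using lin_aux[of "real t" "real d" "real n * s" "real n"] td n3 by simp
  have "real (t + 4 * (3*t + d + 1)) = 13 * real t + 4 * real d + 4" by simp
  then have dim: "t + 4 * (3*t + d + 1) \<le> n" using r by (simp only: of_nat_le_iff flip: of_nat_le_iff[where 'a=real])
  interpret constr t d n by standard (rule dim)
  have akm: "\<alpha> * (2^t * 2^d) \<le> 1" using ak1 unfolding k_def m_def by simp
  note main = constr_main[OF apos akm]
  have cardA: "real (card A) = 2^n / m" using main unfolding m_def by simp
  have sp: "real (2^t * (2^t * (2^d - 1))) \<le> real (card (large_spec n \<alpha> A))"
    using main by (simp only: of_nat_le_iff)
  have sp': "real (2^t * (2^t * (2^d - 1)::nat)) = k * (k * (m - 1))"
    unfolding k_def m_def by (simp add: of_nat_diff)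
  have tt: "real (T2 (large_spec n \<alpha> A)) \<le> real (2^t * 2^t * 2^t * (2^t * (2^d)^3 + 3 * (2^t * 2^d)^2) :: nat)"
    using main by (simp only: of_nat_le_iff)
  have tt': "real (2^t * 2^t * 2^t * (2^t * (2^d)^3 + 3 * (2^t * 2^d)^2) :: nat)
       = k*k*k*(k*m^3 + 3*(k*m)^2)" unfolding k_def m_def by simp
  show ?thesis
  proof (intro exI[of _ A] conjI)
    show "A \<subseteq> cube n" using main by simp
    show "\<delta> * 2 ^ n \<le> real (card A)"
      unfolding cardA using dm1 mpos by (simp add: field_simps)
    show "real (card A) \<le> 8 * \<delta> * 2 ^ n"
      unfolding cardA using dm2 mpos by (simp add: field_simps)
    show "\<delta> / (8 * \<alpha>^2) \<le> real (card (large_spec n \<alpha> A))"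
    proof -
      have "2 * \<delta> * m \<le> 2 * (1/64) * m" using d64 mpos by (intro mult_right_mono) auto
      then have m32: "m \<ge> 32" using dm2 by linarith
      have "(1::real) < (2 * (\<alpha> * (k * m)))^2" using ak2 by (smt (verit) one_less_power zero_less_numeral)
      then have h1: "1 < 4 * \<alpha>^2 * k^2 * m^2" by (simp add: power_mult_distrib)
      have "\<delta> * m < 4 * \<alpha>^2 * k^2 * m^2" using dm1 h1 by linarith
      then have h2: "\<delta> < 4 * \<alpha>^2 * k^2 * m" using mpos by (simp add: power2_eq_square field_simps)
      have "\<delta> / (8 * \<alpha>^2) < k^2 * m / 2" using h2 apos by (simp add: field_simps)
      also have "k^2 * m / 2 \<le> k * (k * (m - 1))" using m32 kpos
        by (simp add: power2_eq_square field_simps mult_left_mono)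
      finally show ?thesis using sp sp' by linarith
    qed
    show "real (T2 (large_spec n \<alpha> A)) \<le> 16 * \<delta> / \<alpha>^4"
    proof -
      have eq: "k*k*k*(k*m^3 + 3*(k*m)^2) = k^4 * m^3 + 3 * (k^5 * m^2)"
        by (simp add: power2_eq_square power3_eq_cube eval_nat_numeral algebra_simps)
      have kb: "k \<le> 1 / (\<alpha> * m)" using ak1 apos mpos by (simp add: field_simps)
      have im: "1 / m < 2 * \<delta>" using dm2 mpos by (simp add: field_simps)
      have b1: "k^4 * m^3 \<le> (1 / (\<alpha> * m))^4 * m^3"
        using kb kpos mpos by (intro mult_right_mono power_mono) auto
      have b1': "(1 / (\<alpha> * m))^4 * m^3 = (1/m) / \<alpha>^4" using mpos apos
        by (simp add: field_simps eval_nat_numeral)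
      have b1'': "(1/m) / \<alpha>^4 \<le> 2 * \<delta> / \<alpha>^4" by (rule divide_right_mono) (use im apos in auto)
      have b2: "k^5 * m^2 \<le> (1 / (\<alpha> * m))^5 * m^2"
        using kb kpos mpos by (intro mult_right_mono power_mono) auto
      have b2': "(1 / (\<alpha> * m))^5 * m^2 = (1/m)^3 / \<alpha>^5" using mpos apos
        by (simp add: field_simps eval_nat_numeral)
      have "(1/m)^3 \<le> (2*\<delta>)^3" using im mpos by (intro power_mono) auto
      also have "(2*\<delta>)^3 = 8 * \<delta>^3" by (simp add: power_mult_distrib)
      finally have b2'': "(1/m)^3 / \<alpha>^5 \<le> 8 * \<delta>^3 / \<alpha>^5" by (rule divide_right_mono) (use apos in auto)
      have d3: "\<delta>^3 \<le> \<delta> * \<alpha> / 32" using assms(6) dpos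
        by (simp add: power2_eq_square power3_eq_cube)
      have b3: "8 * \<delta>^3 / \<alpha>^5 \<le> \<delta> / (4 * \<alpha>^4)"
      proof -
        have "8 * \<delta>^3 / \<alpha>^5 \<le> 8 * (\<delta> * \<alpha> / 32) / \<alpha>^5" by (rule divide_right_mono) (use d3 apos in \<open>auto simp: mult.commute\<close>)
        also have "\<dots> = \<delta> / (4 * \<alpha>^4)" using apos by (simp add: field_simps eval_nat_numeral)
        finally show ?thesis .
      qed
      have "k*k*k*(k*m^3 + 3*(k*m)^2) \<le> 2 * \<delta> / \<alpha>^4 + 3 * (\<delta> / (4 * \<alpha>^4))"
        unfolding eq using b1 b1' b1'' b2 b2' b2'' b3 by linarith
      also have "\<dots> \<le> 16 * \<delta> / \<alpha>^4" using dpos apos by (simp add: field_simps)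
      finally show ?thesis using tt tt' by linarith
    qed
  qed
qed

end
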